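(* Let $G$ be a graph on vertex set $[n]$ and $r\ge1$ an integer, and suppose that no vertex of $G$ has more than one cycle in its $r$-neighborhood. Define the relation $i\sim j$ iff there is a cycle contained in the intersection of the $r$-neighborhoods of $i$ and $j$, and let $B=A^{[r]}-A^{\{r\}}$. Then for all $i,j\in[n]$: (i) $B_{ij}\ne0$ implies $i\sim j$; (ii) $B_{ij}\ne0$ implies there are at least two paths of length $\le r$ from $i$ to $j$; (iii) $|B_{ij}|\le 1$; (iv) there are at most two paths of length $\le r$ from $i$ to $j$.
   Context: The $r$-neighborhood of a vertex $v$ is the subgraph of $G$ induced by vertices at graph distance at most $r$ from $v$. $A^{[r]}$ is the $r$-distance matrix: $A^{[r]}_{ij}=1$ if $d_G(i,j)=r$ and $0$ otherwise. $A^{\{r\}}$ is the length-$r$ self-avoiding-walk matrix: $A^{\{r\}}_{ij}$ is the number of self-avoiding walks (paths) of length exactly $r$ between $i$ and $j$. *)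

theory Defs
  imports Main "HOL-Library.Extended_Nat"
begin

(* A simple graph is given by an edge relation E (symmetric, irreflexive).
   Walks are nonempty vertex lists with consecutive vertices adjacent;
   a walk with k+1 vertices has length k. *)

definition walk :: "('a \<Rightarrow> 'a \<Rightarrow> bool) \<Rightarrow> 'a list \<Rightarrow> bool" where
  "walk E xs \<longleftrightarrow> xs \<noteq> [] \<and> (\<forall>k. Suc k < length xs \<longrightarrow> E (xs ! k) (xs ! Suc k))"

definition gpath :: "('a \<Rightarrow> 'a \<Rightarrow> bool) \<Rightarrow> 'a list \<Rightarrow> bool" where
  "gpath E xs \<longleftrightarrow> walk E xs \<and> distinct xs"

(* graph distance; \<infinity> if no walk *)
definition gdist :: "('a \<Rightarrow> 'a \<Rightarrow> bool) \<Rightarrow> 'a \<Rightarrow> 'a \<Rightarrow> enat" where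
  "gdist E i j = (INF xs \<in> {xs. walk E xs \<and> hd xs = i \<and> last xs = j}. enat (length xs - 1))"

definition ball :: "'a set \<Rightarrow> ('a \<Rightarrow> 'a \<Rightarrow> bool) \<Rightarrow> 'a \<Rightarrow> nat \<Rightarrow> 'a set" where
  "ball V E v r = {u \<in> V. gdist E v u \<le> enat r}"

definition dist_mat :: "('a \<Rightarrow> 'a \<Rightarrow> bool) \<Rightarrow> nat \<Rightarrow> 'a \<Rightarrow> 'a \<Rightarrow> int" where
  "dist_mat E r i j = (if gdist E i j = enat r then 1 else 0)"

definition saw_mat :: "('a \<Rightarrow> 'a \<Rightarrow> bool) \<Rightarrow> nat \<Rightarrow> 'a \<Rightarrow> 'a \<Rightarrow> int" where
  "saw_mat E r i j = int (card {xs. gpath E xs \<and> hd xs = i \<and> last xs = j \<and> length xs = r + 1})"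

definition paths_le :: "('a \<Rightarrow> 'a \<Rightarrow> bool) \<Rightarrow> nat \<Rightarrow> 'a \<Rightarrow> 'a \<Rightarrow> 'a list set" where
  "paths_le E r i j = {xs. gpath E xs \<and> hd xs = i \<and> last xs = j \<and> length xs \<le> r + 1}"

(* cycles, identified with their edge sets (sets of 2-element vertex sets) *)
definition cycle_edges :: "'a list \<Rightarrow> 'a set set" where
  "cycle_edges xs = {{xs ! k, xs ! ((k + 1) mod length xs)} | k. k < length xs}"

definition is_cycle :: "('a \<Rightarrow> 'a \<Rightarrow> bool) \<Rightarrow> 'a set set \<Rightarrow> bool" where
  "is_cycle E C \<longleftrightarrow> (\<exists>xs. distinct xs \<and> length xs \<ge> 3 \<and>
      (\<forall>k < length xs. E (xs ! k) (xs ! ((k + 1) mod length xs))) \<and> C = cycle_edges xs)"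

(* a cycle C is contained in the induced subgraph on S iff all its vertices lie in S *)
definition cycle_in :: "('a \<Rightarrow> 'a \<Rightarrow> bool) \<Rightarrow> 'a set set \<Rightarrow> 'a set \<Rightarrow> bool" where
  "cycle_in E C S \<longleftrightarrow> is_cycle E C \<and> \<Union>C \<subseteq> S"

definition cyc_rel :: "'a set \<Rightarrow> ('a \<Rightarrow> 'a \<Rightarrow> bool) \<Rightarrow> nat \<Rightarrow> 'a \<Rightarrow> 'a \<Rightarrow> bool" where
  "cyc_rel V E r i j \<longleftrightarrow> (\<exists>C. cycle_in E C (ball V E i r \<inter> ball V E j r))"

end

theory Submission
  imports Defs
begin

lemma walk_single[simp]: "walk E [x]"
  by (simp add: walk_def)

lemma walk_Cons2: "walk E (x # y # xs) \<longleftrightarrow> E x y \<and> walk E (y # xs)"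
  unfolding walk_def
proof safe
  fix k assume "\<forall>k. Suc k < length (x # y # xs) \<longrightarrow> E ((x # y # xs) ! k) ((x # y # xs) ! Suc k)"
    and "Suc k < length (y # xs)"
  then show "E ((y # xs) ! k) ((y # xs) ! Suc k)" by (metis Suc_less_eq length_Cons nth_Cons_Suc)
next
  assume "\<forall>k. Suc k < length (x # y # xs) \<longrightarrow> E ((x # y # xs) ! k) ((x # y # xs) ! Suc k)"
  then show "E x y" by fastforce
next
  fix k assume "E x y" "\<forall>k. Suc k < length (y # xs) \<longrightarrow> E ((y # xs) ! k) ((y # xs) ! Suc k)"
    "Suc k < length (x # y # xs)"
  then show "E ((x # y # xs) ! k) ((x # y # xs) ! Suc k)"
    by (cases k) auto
qed

lemma walk_append:
  assumes "walk E (xs @ [y])" "walk E (y # ys)" shows "walk E (xs @ y # ys)"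
  using assms
proof (induction xs)
  case Nil then show ?case by simp
next
  case (Cons x xs)
  show ?case
  proof (cases xs)
    case Nil then show ?thesis using Cons.prems by (simp add: walk_Cons2)
  next
    case (Cons z zs) then show ?thesis using Cons.prems Cons.IH by (simp add: walk_Cons2)
  qed
qed

lemma walk_join:
  assumes "walk E A" "walk E B" "last A = hd B" shows "walk E (butlast A @ B)"
proof -
  have A: "A = butlast A @ [last A]" using assms(1) by (simp add: walk_def)
  have B: "B = hd B # tl B" using assms(2) by (simp add: walk_def)
  show ?thesis using walk_append[of E "butlast A" "last A" "tl B"] assms A B by metis
qed

lemma walk_take: "walk E xs \<Longrightarrow> 0 < t \<Longrightarrow> walk E (take t xs)"
  unfolding walk_def by auto

lemma walk_drop: "walk E xs \<Longrightarrow> t < length xs \<Longrightarrow> walk E (drop t xs)"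
  unfolding walk_def by auto

lemma walk_rev: assumes "\<And>u v. E u v \<Longrightarrow> E v u" "walk E xs" shows "walk E (rev xs)"
proof -
  have "E (rev xs ! k) (rev xs ! Suc k)" if k: "Suc k < length (rev xs)" for k
  proof -
    have "E (xs ! (length xs - Suc (Suc k))) (xs ! Suc (length xs - Suc (Suc k)))"
      using assms(2) k unfolding walk_def by auto
    moreover have "Suc (length xs - Suc (Suc k)) = length xs - Suc k" using k by simp
    ultimately show ?thesis using k assms(1) by (simp add: rev_nth)
  qed
  then show ?thesis using assms(2) unfolding walk_def by auto
qed

lemma walk_edge: "walk E xs \<Longrightarrow> Suc k < length xs \<Longrightarrow> E (xs ! k) (xs ! Suc k)"
  unfolding walk_def by auto

lemma walk_to_path:
  "walk E xs \<Longrightarrow> \<exists>ys. gpath E ys \<and> hd ys = hd xs \<and> last ys = last xs \<and> length ys \<le> length xs"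
proof (induction "length xs" arbitrary: xs rule: less_induct)
  case less
  show ?case
  proof (cases "distinct xs")
    case True then show ?thesis using less.prems by (auto simp: gpath_def)
  next
    case False
    then obtain as bs cs y where xs: "xs = as @ [y] @ bs @ [y] @ cs"
      using not_distinct_decomp by blast
    define zs where "zs = as @ [y] @ cs"
    have w1: "walk E (as @ [y])"
      using walk_take[OF less.prems, of "Suc (length as)"] xs by simp
    have w2: "walk E (y # cs)"
      using walk_drop[OF less.prems, of "length as + Suc (length bs)"] xs by simp
    have "walk E zs" unfolding zs_def using walk_append[OF w1 w2] by simp
    moreover have "length zs < length xs" using xs zs_def by simp
    moreover have "hd zs = hd xs" "last zs = last xs" using xs zs_def by (cases as; simp)+
    ultimately show ?thesis using less.hyps by fastforce
  qed
qed

lemma gdist_le: "walk E xs \<Longrightarrow> gdist E (hd xs) (last xs) \<le> enat (length xs - 1)"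
  unfolding gdist_def by (rule INF_lower) auto

lemma gdist_attained:
  assumes "gdist E i j \<noteq> \<infinity>"
  shows "\<exists>xs. walk E xs \<and> hd xs = i \<and> last xs = j \<and> gdist E i j = enat (length xs - 1)"
proof -
  define S where "S = (\<lambda>xs. enat (length xs - 1)) ` {xs. walk E xs \<and> hd xs = i \<and> last xs = j}"
  have g: "gdist E i j = Inf S" unfolding gdist_def S_def by simp
  have "S \<noteq> {}" using assms g by (auto simp: Inf_enat_def)
  then have "Inf S \<in> S" unfolding Inf_enat_def by (auto intro: LeastI)
  then show ?thesis using g unfolding S_def by auto
qed

lemma cycle_from_list:
  assumes "distinct xs" "length xs \<ge> 3" "walk E xs" "E (last xs) (hd xs)"
  shows "is_cycle E (cycle_edges xs)"
  unfolding is_cycle_def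
proof (intro exI conjI allI impI)
  fix k assume k: "k < length xs"
  show "E (xs ! k) (xs ! ((k + 1) mod length xs))"
  proof (cases "Suc k < length xs")
    case True then show ?thesis using walk_edge[OF assms(3) True] by simp
  next
    case False
    then have "k = length xs - 1" using k by simp
    moreover have "xs \<noteq> []" using assms(2) by auto
    then have "xs ! (length xs - 1) = last xs" "xs ! 0 = hd xs"
      by (simp_all add: last_conv_nth hd_conv_nth)
    moreover have "k + 1 = length xs" using k False by simp
    then have "(k + 1) mod length xs = 0" by simp
    ultimately show ?thesis using assms(4) by simp
  qed
qed (use assms in auto)



lemma ce_first: "length xs \<ge> 3 \<Longrightarrow> {xs ! 0, xs ! 1} \<in> cycle_edges xs"
  unfolding cycle_edges_def by (rule CollectI, rule exI[of _ 0]) auto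



lemma ce_last: assumes "xs \<noteq> []" shows "{last xs, hd xs} \<in> cycle_edges xs"
proof -
  have L: "length xs - 1 < length xs" using assms by simp
  have "{xs ! (length xs - 1), xs ! ((length xs - 1 + 1) mod length xs)} \<in> cycle_edges xs"
    unfolding cycle_edges_def by (rule CollectI, rule exI[of _ "length xs - 1"], rule conjI, rule refl, rule L)
  moreover have "length xs - 1 + 1 = length xs" using L by linarith
  ultimately show ?thesis using assms by (simp add: last_conv_nth hd_conv_nth)
qed


lemma ce_vertices: "\<Union>(cycle_edges xs) \<subseteq> set xs"
proof -
  have "xs ! (Suc k mod length xs) \<in> set xs" if "k < length xs" for k
  proof -
    have "0 < length xs" using that by linarith
    then show ?thesis by (metis mod_less_divisor nth_mem)
  qed
  then show ?thesis unfolding cycle_edges_def by auto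
qed

lemma ce_nbr:
  assumes "distinct xs" "length xs \<ge> 3" "{a, x} \<in> cycle_edges xs" "xs ! p = a" "p < length xs"
  shows "x = xs ! ((p + 1) mod length xs) \<or> x = xs ! ((p + length xs - 1) mod length xs)"
proof -
  let ?L = "length xs"
  obtain k where k: "k < ?L" and e: "{a, x} = {xs ! k, xs ! ((k + 1) mod ?L)}"
    using assms(3) unfolding cycle_edges_def by auto
  have L0: "0 < ?L" using assms(2) by linarith
  have k1: "(k + 1) mod ?L < ?L" using L0 by (rule mod_less_divisor)
  from e have "(a = xs ! k \<and> x = xs ! ((k + 1) mod ?L)) \<or> (a = xs ! ((k + 1) mod ?L) \<and> x = xs ! k)"
    by (auto simp: doubleton_eq_iff)
  then show ?thesis
  proof
    assume h: "a = xs ! k \<and> x = xs ! ((k + 1) mod ?L)"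
    then have "xs ! k = xs ! p" using assms(4) by simp
    then have "k = p" using assms(1,5) k by (simp add: nth_eq_iff_index_eq)
    then show ?thesis using h by simp
  next
    assume h: "a = xs ! ((k + 1) mod ?L) \<and> x = xs ! k"
    then have "xs ! ((k + 1) mod ?L) = xs ! p" using assms(4) by simp
    then have kp: "(k + 1) mod ?L = p" using assms(1,5) k1 by (simp add: nth_eq_iff_index_eq)
    have "k = (p + ?L - 1) mod ?L"
    proof (cases "k + 1 < ?L")
      case True
      then have "p = k + 1" using kp by simp
      then show ?thesis using k by simp
    next
      case False
      then have "k + 1 = ?L" using k by simp
      then have "p = 0" using kp by simp
      then show ?thesis using k \<open>k + 1 = ?L\<close> by simp
    qed
    then show ?thesis using h by simp
  qed
qed

lemma ce_degree:
  assumes "distinct xs" "length xs \<ge> 3" "{a, x} \<in> cycle_edges xs" "{a, y} \<in> cycle_edges xs"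
    "{a, z} \<in> cycle_edges xs"
  shows "x = y \<or> x = z \<or> y = z"
proof -
  have "a \<in> \<Union>(cycle_edges xs)" using assms(3) by (rule UnionI) simp
  then have "a \<in> set xs" by (rule subsetD[OF ce_vertices])
  then obtain p where p: "p < length xs" "xs ! p = a" by (auto simp: in_set_conv_nth)
  define u where "u = xs ! ((p + 1) mod length xs)"
  define w where "w = xs ! ((p + length xs - 1) mod length xs)"
  have "x = u \<or> x = w" using ce_nbr[OF assms(1,2,3) p(2,1)] unfolding u_def w_def .
  moreover have "y = u \<or> y = w" using ce_nbr[OF assms(1,2,4) p(2,1)] unfolding u_def w_def .
  moreover have "z = u \<or> z = w" using ce_nbr[OF assms(1,2,5) p(2,1)] unfolding u_def w_def .
  ultimately show ?thesis by (elim disjE) simp_all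
qed

lemma two_path_cycle:
  assumes sym: "\<And>u v. E u v \<Longrightarrow> E v u"
    and P: "gpath E P" and Q: "gpath E Q" and last: "last P = last Q"
    and k0: "0 < k" and kP: "k < length P" and kQ: "k < length Q"
    and agree: "P ! (k - 1) = Q ! (k - 1)" and diff: "P ! k \<noteq> Q ! k"
  shows "\<exists>xs. distinct xs \<and> length xs \<ge> 3 \<and> is_cycle E (cycle_edges xs)
           \<and> set xs \<subseteq> set (drop (k - 1) P) \<union> set (drop (k - 1) Q)
           \<and> {P ! (k - 1), P ! k} \<in> cycle_edges xs \<and> {P ! (k - 1), Q ! k} \<in> cycle_edges xs"
proof -
  have wP: "walk E P" and dP: "distinct P" using P by (auto simp: gpath_def)
  have wQ: "walk E Q" and dQ: "distinct Q" using Q by (auto simp: gpath_def)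
  define a where "a = P ! (k - 1)"
  define m0 where "m0 = length P - 1 - k"
  have Pne: "P \<noteq> []" using kP by auto
  have "k + m0 = length P - 1" using kP unfolding m0_def by linarith
  then have "P ! (k + m0) = last P" using Pne by (simp add: last_conv_nth)
  moreover have "last Q \<in> set (drop k Q)" using kQ
    by (metis drop_eq_Nil2 last_drop last_in_set not_le)
  ultimately have ex: "P ! (k + m0) \<in> set (drop k Q)" using last by simp
  define m where "m = (LEAST m. P ! (k + m) \<in> set (drop k Q))"
  have hm: "P ! (k + m) \<in> set (drop k Q)" unfolding m_def by (rule LeastI[where P="\<lambda>m. P ! (k + m) \<in> set (drop k Q)", OF ex])
  have mmin: "P ! (k + t) \<notin> set (drop k Q)" if "t < m" for t
    using not_less_Least[OF that[unfolded m_def]] by simp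
  have "m \<le> m0" unfolding m_def by (rule Least_le[where P="\<lambda>m. P ! (k + m) \<in> set (drop k Q)", OF ex])
  then have mP: "k + m < length P" using kP unfolding m0_def by simp
  obtain m' where m'Q0: "m' < length Q - k" and m'eq: "Q ! (k + m') = P ! (k + m)"
    using hm by (auto simp: in_set_conv_nth)
  have m'Q: "k + m' < length Q" using m'Q0 by linarith
  define A where "A = take (m + 2) (drop (k - 1) P)"
  define Bq where "Bq = rev (take (m' + 1) (drop k Q))"
  define xs where "xs = butlast A @ Bq"
  have lenA: "length A = m + 2" using mP k0 unfolding A_def by simp
  have Anth: "A ! t = P ! (k - 1 + t)" if "t < m + 2" for t
    using that mP k0 unfolding A_def by simp
  have lenB: "length Bq = m' + 1" using m'Q unfolding Bq_def by simp
  have Bnth: "Bq ! s = Q ! (k + (m' - s))" if "s < m' + 1" for s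
    using that m'Q unfolding Bq_def by (simp add: rev_nth)
  have bA: "butlast A = take (m + 1) (drop (k - 1) P)" unfolding A_def
    using mP k0 by (simp add: butlast_take)
  have wA: "walk E A" unfolding A_def using k0 kP
    by (intro walk_take walk_drop wP) auto
  have wB: "walk E Bq" unfolding Bq_def using kQ
    by (intro walk_rev[OF sym] walk_take walk_drop wQ) auto
  have lastA: "last A = P ! (k + m)"
  proof -
    have "A \<noteq> []" using lenA by auto
    then have "last A = A ! (m + 1)" using lenA by (simp add: last_conv_nth)
    then show ?thesis using Anth[of "m + 1"] k0 by simp
  qed
  have hdB: "hd Bq = Q ! (k + m')"
  proof -
    have "Bq \<noteq> []" using lenB by auto
    then show ?thesis using Bnth[of 0] by (simp add: hd_conv_nth)
  qed
  have wX: "walk E xs" unfolding xs_def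
    by (rule walk_join[OF wA wB]) (simp add: lastA hdB m'eq)
  have dbA: "distinct (butlast A)" unfolding bA using dP by simp
  have dB: "distinct Bq" unfolding Bq_def using dQ by simp
  have disj: "set (butlast A) \<inter> set Bq = {}"
  proof (rule ccontr)
    assume "set (butlast A) \<inter> set Bq \<noteq> {}"
    then obtain x where x1: "x \<in> set (butlast A)" and x2: "x \<in> set Bq" by blast
    from x1 obtain t where t: "t < m + 1" and xt: "x = P ! (k - 1 + t)"
      using lenA Anth by (auto simp: in_set_conv_nth nth_butlast)
    from x2 obtain s where s: "s < m' + 1" and xs': "x = Q ! (k + (m' - s))"
      using lenB Bnth by (auto simp: in_set_conv_nth)
    have i1: "m' - s < length (drop k Q)" using m'Q by simp
    have "drop k Q ! (m' - s) = Q ! (k + (m' - s))" using kQ by simp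
    then have xinQ: "x \<in> set (drop k Q)" using xs' nth_mem[OF i1] by simp
    show False
    proof (cases t)
      case 0
      then have "x = Q ! (k - 1)" using xt agree by simp
      moreover have "k - 1 < length Q" "k + (m' - s) < length Q" using kQ m'Q by auto
      ultimately have "k - 1 = k + (m' - s)" using xs' dQ nth_eq_iff_index_eq by metis
      then show False using k0 by simp
    next
      case (Suc t')
      then have "t' < m" using t by simp
      moreover have "x = P ! (k + t')" using xt Suc k0 by simp
      ultimately show False using mmin xinQ by blast
    qed
  qed
  have dX: "distinct xs" unfolding xs_def using dbA dB disj by simp
  have m'0: "m' \<noteq> 0" if "m = 0"
  proof
    assume "m' = 0"
    then show False using m'eq diff that by simp
  qed
  have lenX: "length xs \<ge> 3" unfolding xs_def using lenA lenB m'0 by (cases "m = 0") auto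
  have lbA: "length (butlast A) = m + 1" using lenA by simp
  have xs0: "xs ! 0 = a"
  proof -
    have "xs ! 0 = butlast A ! 0" unfolding xs_def using lbA by (simp add: nth_append)
    also have "\<dots> = A ! 0" using lbA by (simp add: nth_butlast)
    finally show ?thesis unfolding a_def using Anth[of 0] by simp
  qed
  have xs1: "xs ! 1 = P ! k"
  proof (cases "m = 0")
    case True
    then have "xs ! 1 = Bq ! 0" unfolding xs_def using lbA by (simp add: nth_append)
    then show ?thesis using Bnth[of 0] m'eq True by simp
  next
    case False
    then have "xs ! 1 = butlast A ! 1" unfolding xs_def using lbA by (simp add: nth_append)
    also have "\<dots> = A ! 1" using lbA False by (simp add: nth_butlast)
    finally have "xs ! 1 = A ! 1" .
    then show ?thesis using Anth[of 1] k0 by simp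
  qed
  have Xne: "xs \<noteq> []" unfolding xs_def using lenB by auto
  have hdX: "hd xs = a" using xs0 Xne by (simp add: hd_conv_nth)
  have lastX: "last xs = Q ! k"
  proof -
    have Bne: "Bq \<noteq> []" using lenB by auto
    then have "last xs = last Bq" unfolding xs_def by simp
    also have "\<dots> = Bq ! m'" using Bne lenB by (simp add: last_conv_nth)
    finally show ?thesis using Bnth[of m'] by simp
  qed
  have eQ: "E (Q ! (k - 1)) (Q ! k)" using walk_edge[OF wQ, of "k - 1"] k0 kQ by simp
  have ecl: "E (last xs) (hd xs)" using hdX lastX sym[OF eQ] agree a_def by simp
  have cyc: "is_cycle E (cycle_edges xs)" by (rule cycle_from_list[OF dX lenX wX ecl])
  have "set (butlast A) \<subseteq> set (drop (k - 1) P)" unfolding bA by (rule set_take_subset)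
  moreover have "set Bq \<subseteq> set (drop (k - 1) Q)"
  proof -
    have "set (take (m' + 1) (drop k Q)) \<subseteq> set (drop k Q)" by (rule set_take_subset)
    moreover have "set (drop k Q) \<subseteq> set (drop (k - 1) Q)" by (rule set_drop_subset_set_drop) simp
    ultimately show ?thesis unfolding Bq_def set_rev by (rule subset_trans)
  qed
  ultimately have sX: "set xs \<subseteq> set (drop (k - 1) P) \<union> set (drop (k - 1) Q)"
    unfolding xs_def by auto
  have e1: "{P ! (k - 1), P ! k} \<in> cycle_edges xs" using ce_first[OF lenX] xs0 xs1 a_def by simp
  have e2: "{P ! (k - 1), Q ! k} \<in> cycle_edges xs"
    using ce_last[OF Xne] hdX lastX a_def by (simp add: insert_commute)
  show ?thesis by (intro exI[of _ xs] conjI dX lenX cyc sX e1 e2)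
qed

lemma no_prefix:
  assumes "\<forall>t < length P. P ! t = Q ! t" "length P \<le> length Q" "last P = last Q"
    "distinct Q" "P \<noteq> []"
  shows "P = Q"
proof (cases "length P = length Q")
  case True then show ?thesis using assms(1) by (simp add: nth_equalityI)
next
  case False
  then have lt: "length P - 1 < length Q - 1" using assms(2,5) by (cases P) auto
  have "last P = Q ! (length P - 1)" using assms(1,5) by (simp add: last_conv_nth)
  moreover have "Q \<noteq> []" using assms(2,5) by (cases Q) auto
  then have "last Q = Q ! (length Q - 1)" by (simp add: last_conv_nth)
  ultimately have "Q ! (length P - 1) = Q ! (length Q - 1)" using assms(3) by simp
  moreover have "length P - 1 < length Q" "length Q - 1 < length Q" using lt by auto
  ultimately have "length P - 1 = length Q - 1" using assms(4) by (simp add: nth_eq_iff_index_eq)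
  then show ?thesis using lt by simp
qed

lemma diverge:
  assumes "distinct P" "distinct Q" "P \<noteq> Q" "P \<noteq> []" "Q \<noteq> []" "hd P = hd Q" "last P = last Q"
  shows "\<exists>k. 0 < k \<and> k < length P \<and> k < length Q \<and> (\<forall>t<k. P ! t = Q ! t) \<and> P ! k \<noteq> Q ! k"
proof -
  have ex: "\<exists>k. k < length P \<and> k < length Q \<and> P ! k \<noteq> Q ! k"
  proof (rule ccontr)
    assume "\<not> ?thesis"
    then have agr: "\<forall>k. k < length P \<and> k < length Q \<longrightarrow> P ! k = Q ! k" by blast
    show False
    proof (cases "length P \<le> length Q")
      case True
      then have "\<forall>t < length P. P ! t = Q ! t" using agr by auto
      then have "P = Q" using no_prefix True assms by blast
      then show False using assms(3) by simp
    next
      case False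
      then have "\<forall>t < length Q. Q ! t = P ! t" using agr by auto
      then have "Q = P" using no_prefix[of Q P] False assms by simp
      then show False using assms(3) by simp
    qed
  qed
  define k where "k = (LEAST k. k < length P \<and> k < length Q \<and> P ! k \<noteq> Q ! k)"
  have hk: "k < length P \<and> k < length Q \<and> P ! k \<noteq> Q ! k"
    unfolding k_def by (rule LeastI_ex[OF ex])
  have below: "P ! t = Q ! t" if "t < k" for t
  proof -
    have "\<not> (t < length P \<and> t < length Q \<and> P ! t \<noteq> Q ! t)"
      using not_less_Least[OF that[unfolded k_def]] .
    then show ?thesis using that hk by auto
  qed
  have "k \<noteq> 0"
  proof
    assume "k = 0"
    then have "P ! k = Q ! k" using assms(4,5,6) by (simp add: hd_conv_nth)
    then show False using hk by simp
  qed
  then show ?thesis using hk below by blast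
qed

lemma cyc_subset:
  assumes "set xs \<subseteq> set (drop (k - 1) P) \<union> set (drop (k - 1) Q)" "set P \<subseteq> S" "set Q \<subseteq> S"
  shows "\<Union>(cycle_edges xs) \<subseteq> S"
proof -
  have "set (drop (k - 1) P) \<subseteq> set P" "set (drop (k - 1) Q) \<subseteq> set Q" by (rule set_drop_subset)+
  then show ?thesis using ce_vertices[of xs] assms by blast
qed

lemma three_strict:
  assumes sym: "\<And>u v. E u v \<Longrightarrow> E v u"
    and P: "gpath E P" and Q: "gpath E Q" and R: "gpath E R"
    and l1: "last P = last Q" and l2: "last P = last R"
    and uniq: "\<And>C1 C2. is_cycle E C1 \<Longrightarrow> \<Union>C1 \<subseteq> S \<Longrightarrow> is_cycle E C2 \<Longrightarrow> \<Union>C2 \<subseteq> S \<Longrightarrow> C1 = C2"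
    and sP: "set P \<subseteq> S" and sQ: "set Q \<subseteq> S" and sR: "set R \<subseteq> S"
    and k: "0 < k" "k < length P" "k < length R" "\<forall>t<k. P ! t = R ! t" "P ! k \<noteq> R ! k"
    and k': "0 < k'" "k' < length P" "k' < length Q" "\<forall>t<k'. P ! t = Q ! t" "P ! k' \<noteq> Q ! k'"
    and kk: "k < k'"
  shows False
proof -
  have a1: "P ! (k - 1) = R ! (k - 1)" using k by simp
  have a2: "P ! (k' - 1) = Q ! (k' - 1)" using k' by simp
  obtain xs1 where x1: "is_cycle E (cycle_edges xs1)"
    "set xs1 \<subseteq> set (drop (k - 1) P) \<union> set (drop (k - 1) R)"
    "{P ! (k - 1), P ! k} \<in> cycle_edges xs1"
    using two_path_cycle[OF sym P R l2 k(1,2,3) a1 k(5)] by blast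
  obtain xs2 where x2: "is_cycle E (cycle_edges xs2)"
    "set xs2 \<subseteq> set (drop (k' - 1) P) \<union> set (drop (k' - 1) Q)"
    using two_path_cycle[OF sym P Q l1 k'(1,2,3) a2 k'(5)] by blast
  have "cycle_edges xs1 = cycle_edges xs2"
    by (rule uniq[OF x1(1) cyc_subset[OF x1(2) sP sR] x2(1) cyc_subset[OF x2(2) sP sQ]])
  then have "P ! (k - 1) \<in> \<Union>(cycle_edges xs2)" using x1(3)
    by (metis UnionI insertI1)
  then have "P ! (k - 1) \<in> set xs2" by (rule subsetD[OF ce_vertices])
  then have "P ! (k - 1) \<in> set (drop (k' - 1) P) \<or> P ! (k - 1) \<in> set (drop (k' - 1) Q)"
    using x2(2) by blast
  then show False
  proof
    assume "P ! (k - 1) \<in> set (drop (k' - 1) P)"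
    then obtain s where s: "s < length P - (k' - 1)" "P ! (k - 1) = P ! (k' - 1 + s)"
      by (auto simp: in_set_conv_nth)
    have dP: "distinct P" using P by (simp add: gpath_def)
    have "k - 1 < length P" "k' - 1 + s < length P" using s k by auto
    then have "k - 1 = k' - 1 + s" using s(2) dP by (simp add: nth_eq_iff_index_eq)
    then show False using kk k by simp
  next
    assume "P ! (k - 1) \<in> set (drop (k' - 1) Q)"
    then obtain s where s: "s < length Q - (k' - 1)" "P ! (k - 1) = Q ! (k' - 1 + s)"
      by (auto simp: in_set_conv_nth)
    have "P ! (k - 1) = Q ! (k - 1)" using k'(4) kk by simp
    then have e: "Q ! (k - 1) = Q ! (k' - 1 + s)" using s by simp
    have dQ: "distinct Q" using Q by (simp add: gpath_def)
    have "k - 1 < length Q" "k' - 1 + s < length Q" using s kk k' by auto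
    then have "k - 1 = k' - 1 + s" using e dQ by (simp add: nth_eq_iff_index_eq)
    then show False using kk k by simp
  qed
qed

lemma three_equal:
  assumes sym: "\<And>u v. E u v \<Longrightarrow> E v u"
    and P: "gpath E P" and Q: "gpath E Q" and R: "gpath E R"
    and l1: "last P = last Q" and l2: "last P = last R"
    and uniq: "\<And>C1 C2. is_cycle E C1 \<Longrightarrow> \<Union>C1 \<subseteq> S \<Longrightarrow> is_cycle E C2 \<Longrightarrow> \<Union>C2 \<subseteq> S \<Longrightarrow> C1 = C2"
    and sP: "set P \<subseteq> S" and sQ: "set Q \<subseteq> S" and sR: "set R \<subseteq> S"
    and k: "0 < k" "k < length P" "k < length Q" "k < length R"
      "\<forall>t<k. P ! t = Q ! t" "\<forall>t<k. P ! t = R ! t"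
      "P ! k \<noteq> Q ! k" "P ! k \<noteq> R ! k" "Q ! k \<noteq> R ! k"
  shows False
proof -
  have a1: "P ! (k - 1) = Q ! (k - 1)" using k by simp
  have a2: "P ! (k - 1) = R ! (k - 1)" using k by simp
  obtain xs1 where x1: "distinct xs1" "length xs1 \<ge> 3" "is_cycle E (cycle_edges xs1)"
    "set xs1 \<subseteq> set (drop (k - 1) P) \<union> set (drop (k - 1) Q)"
    "{P ! (k - 1), P ! k} \<in> cycle_edges xs1" "{P ! (k - 1), Q ! k} \<in> cycle_edges xs1"
    using two_path_cycle[OF sym P Q l1 k(1,2,3) a1 k(7)] by blast
  obtain xs2 where x2: "is_cycle E (cycle_edges xs2)"
    "set xs2 \<subseteq> set (drop (k - 1) P) \<union> set (drop (k - 1) R)"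
    "{P ! (k - 1), R ! k} \<in> cycle_edges xs2"
    using two_path_cycle[OF sym P R l2 k(1,2,4) a2 k(8)] by blast
  have "cycle_edges xs1 = cycle_edges xs2"
    by (rule uniq[OF x1(3) cyc_subset[OF x1(4) sP sQ] x2(1) cyc_subset[OF x2(2) sP sR]])
  then have "{P ! (k - 1), R ! k} \<in> cycle_edges xs1" using x2(3) by simp
  then have "P ! k = Q ! k \<or> P ! k = R ! k \<or> Q ! k = R ! k"
    by (rule ce_degree[OF x1(1,2,5,6)])
  then show False using k by blast
qed

lemma three_paths:
  assumes sym: "\<And>u v. E u v \<Longrightarrow> E v u"
    and P: "gpath E P" and Q: "gpath E Q" and R: "gpath E R"
    and d: "P \<noteq> Q" "P \<noteq> R" "Q \<noteq> R"
    and h1: "hd P = hd Q" and h2: "hd P = hd R"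
    and l1: "last P = last Q" and l2: "last P = last R"
    and uniq: "\<And>C1 C2. is_cycle E C1 \<Longrightarrow> \<Union>C1 \<subseteq> S \<Longrightarrow> is_cycle E C2 \<Longrightarrow> \<Union>C2 \<subseteq> S \<Longrightarrow> C1 = C2"
    and sP: "set P \<subseteq> S" and sQ: "set Q \<subseteq> S" and sR: "set R \<subseteq> S"
  shows False
proof -
  have dP: "distinct P" "P \<noteq> []" using P by (auto simp: gpath_def walk_def)
  have dQ: "distinct Q" "Q \<noteq> []" using Q by (auto simp: gpath_def walk_def)
  have dR: "distinct R" "R \<noteq> []" using R by (auto simp: gpath_def walk_def)
  obtain k1 where k1: "0 < k1" "k1 < length P" "k1 < length Q" "\<forall>t<k1. P ! t = Q ! t" "P ! k1 \<noteq> Q ! k1"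
    using diverge[OF dP(1) dQ(1) d(1) dP(2) dQ(2) h1 l1] by blast
  obtain k2 where k2: "0 < k2" "k2 < length P" "k2 < length R" "\<forall>t<k2. P ! t = R ! t" "P ! k2 \<noteq> R ! k2"
    using diverge[OF dP(1) dR(1) d(2) dP(2) dR(2) h2 l2] by blast
  have h3: "hd Q = hd R" and l3: "last Q = last R" using h1 h2 l1 l2 by auto
  obtain k3 where k3: "0 < k3" "k3 < length Q" "k3 < length R" "\<forall>t<k3. Q ! t = R ! t" "Q ! k3 \<noteq> R ! k3"
    using diverge[OF dQ(1) dR(1) d(3) dQ(2) dR(2) h3 l3] by blast
  consider "k2 < k1" | "k1 < k2" | "k1 = k2" by linarith
  then show False
  proof cases
    case 1
    show False by (rule three_strict[OF sym P Q R l1 l2 uniq sP sQ sR k2 k1 1])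
  next
    case 2
    show False by (rule three_strict[OF sym P R Q l2 l1 uniq sP sR sQ k1 k2 2])
  next
    case 3
    have QR: "\<forall>t<k1. Q ! t = R ! t" using k1(4) k2(4) 3 by auto
    show False
    proof (cases "Q ! k1 = R ! k1")
      case False
      show False by (rule three_equal[OF sym P Q R l1 l2 uniq sP sQ sR k1(1,2,3) k2(3)[folded 3]
            k1(4) k2(4)[folded 3] k1(5) k2(5)[folded 3] False])
    next
      case True
      have "\<not> k3 \<le> k1"
      proof
        assume "k3 \<le> k1"
        then show False using True QR k3(5) by (cases "k3 = k1") auto
      qed
      then have kk: "k1 < k3" by simp
      have l4: "last Q = last P" using l1 by simp
      have qp: "\<forall>t<k1. Q ! t = P ! t" using k1(4) by auto
      have qp2: "Q ! k1 \<noteq> P ! k1" using k1(5) by auto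
      show False by (rule three_strict[OF sym Q R P l3 l4 uniq sQ sR sP k1(1,3,2) qp qp2 k3 kk])
    qed
  qed
qed

lemma path_vertex_in_ball:
  fixes E :: "nat \<Rightarrow> nat \<Rightarrow> bool"
  assumes edges_in: "\<And>u v. E u v \<Longrightarrow> u \<in> {1..n} \<and> v \<in> {1..n}"
    and sym: "\<And>u v. E u v \<Longrightarrow> E v u"
    and i: "i \<in> {1..n}"
    and xs: "xs \<in> paths_le E r i j" and v: "v \<in> set xs"
  shows "v \<in> ball {1..n} E i r \<inter> ball {1..n} E j r"
proof -
  have w: "walk E xs" and hd: "hd xs = i" and last: "last xs = j" and len: "length xs \<le> r + 1"
    using xs by (auto simp: paths_le_def gpath_def)
  have ne: "xs \<noteq> []" using w by (simp add: walk_def)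
  obtain t where t: "t < length xs" and vt: "v = xs ! t" using v by (auto simp: in_set_conv_nth)
  have w1: "walk E (take (t + 1) xs)" by (rule walk_take[OF w]) simp
  have "hd (take (t + 1) xs) = i" using hd ne by (cases xs) auto
  moreover have "last (take (t + 1) xs) = v" using t vt by (simp add: take_Suc_conv_app_nth)
  moreover have "length (take (t + 1) xs) - 1 \<le> r" using t len by simp
  ultimately have g1: "gdist E i v \<le> enat r"
    using gdist_le[OF w1] by (metis enat_ord_simps(1) order_trans)
  have w2: "walk E (rev (drop t xs))" by (rule walk_rev[OF sym walk_drop[OF w t]])
  have dne: "drop t xs \<noteq> []" using t by simp
  have "hd (rev (drop t xs)) = j" using dne last by (simp add: hd_rev)
  moreover have "last (rev (drop t xs)) = v" using dne t vt by (simp add: last_rev hd_drop_conv_nth)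
  moreover have "length (rev (drop t xs)) - 1 \<le> r" using t len by simp
  ultimately have g2: "gdist E j v \<le> enat r"
    using gdist_le[OF w2] by (metis enat_ord_simps(1) order_trans)
  have vn: "v \<in> {1..n}"
  proof (cases t)
    case 0
    then show ?thesis using vt hd ne i by (simp add: hd_conv_nth)
  next
    case (Suc t')
    then have "E (xs ! t') (xs ! Suc t')" using walk_edge[OF w, of t'] t by simp
    then show ?thesis using edges_in vt Suc by blast
  qed
  show ?thesis using g1 g2 vn by (simp add: ball_def)
qed

lemma finite_paths:
  fixes E :: "nat \<Rightarrow> nat \<Rightarrow> bool"
  assumes edges_in: "\<And>u v. E u v \<Longrightarrow> u \<in> {1..n} \<and> v \<in> {1..n}"
    and sym: "\<And>u v. E u v \<Longrightarrow> E v u"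
    and i: "i \<in> {1..n}"
  shows "finite (paths_le E r i j)"
proof -
  have sub: "paths_le E r i j \<subseteq> {xs. set xs \<subseteq> {1..n} \<and> length xs \<le> r + 1}"
  proof
    fix xs assume xs: "xs \<in> paths_le E r i j"
    have "set xs \<subseteq> {1..n}"
      using path_vertex_in_ball[OF edges_in sym i xs] by (auto simp: ball_def)
    then show "xs \<in> {xs. set xs \<subseteq> {1..n} \<and> length xs \<le> r + 1}" using xs by (simp add: paths_le_def)
  qed
  show ?thesis using finite_lists_length_le[of "{1..n}" "r + 1"] sub
    by (meson finite_subset finite_atLeastAtMost)
qed

theorem proposition1:
  fixes n r :: nat and E :: "nat \<Rightarrow> nat \<Rightarrow> bool"
  assumes edges_in: "\<And>u v. E u v \<Longrightarrow> u \<in> {1..n} \<and> v \<in> {1..n}"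
    and sym: "\<And>u v. E u v \<Longrightarrow> E v u"
    and irrefl: "\<And>u. \<not> E u u"
    and r: "r \<ge> 1"
    and one_cycle: "\<And>v C1 C2. v \<in> {1..n} \<Longrightarrow> cycle_in E C1 (ball {1..n} E v r)
                     \<Longrightarrow> cycle_in E C2 (ball {1..n} E v r) \<Longrightarrow> C1 = C2"
    and i: "i \<in> {1..n}" and j: "j \<in> {1..n}"
  defines "B \<equiv> dist_mat E r i j - saw_mat E r i j"
  shows "(B \<noteq> 0 \<longrightarrow> cyc_rel {1..n} E r i j)
       \<and> (B \<noteq> 0 \<longrightarrow> card (paths_le E r i j) \<ge> 2)
       \<and> \<bar>B\<bar> \<le> 1
       \<and> card (paths_le E r i j) \<le> 2"
proof -
  define Pl where "Pl = paths_le E r i j"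
  define Sw where "Sw = {xs. gpath E xs \<and> hd xs = i \<and> last xs = j \<and> length xs = r + 1}"
  have saw: "saw_mat E r i j = int (card Sw)" by (simp add: saw_mat_def Sw_def)
  have SwPl: "Sw \<subseteq> Pl" by (auto simp: Sw_def Pl_def paths_le_def)
  have fin: "finite Pl" unfolding Pl_def by (rule finite_paths[OF edges_in sym i])
  have finS: "finite Sw" using finite_subset[OF SwPl fin] .
  have inball: "set xs \<subseteq> ball {1..n} E i r \<inter> ball {1..n} E j r" if "xs \<in> Pl" for xs
    using path_vertex_in_ball[OF edges_in sym i that[unfolded Pl_def]] by blast
  have Plp: "gpath E xs \<and> hd xs = i \<and> last xs = j" if "xs \<in> Pl" for xs
    using that by (simp add: Pl_def paths_le_def)
  have uniq: "C1 = C2" if "is_cycle E C1" "\<Union>C1 \<subseteq> ball {1..n} E i r"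
    "is_cycle E C2" "\<Union>C2 \<subseteq> ball {1..n} E i r" for C1 C2
    using one_cycle[OF i] that by (simp add: cycle_in_def)
  have le2: "card Pl \<le> 2"
  proof (rule ccontr)
    assume "\<not> card Pl \<le> 2"
    then have c3: "3 \<le> card Pl" by simp
    then have "Pl \<noteq> {}" by auto
    then obtain P where P: "P \<in> Pl" by auto
    have "card (Pl - {P}) \<ge> 2" using c3 P fin by (simp add: card_Diff_singleton)
    then have "\<not> card (Pl - {P}) \<le> Suc 0" by simp
    then obtain Q R where QR: "Q \<in> Pl - {P}" "R \<in> Pl - {P}" "Q \<noteq> R"
      using card_le_Suc0_iff_eq[of "Pl - {P}"] fin by auto
    have sP: "set P \<subseteq> ball {1..n} E i r" using inball P by blast
    have sQ: "set Q \<subseteq> ball {1..n} E i r" using inball QR by blast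
    have sR: "set R \<subseteq> ball {1..n} E i r" using inball QR by blast
    have pP: "gpath E P" "hd P = i" "last P = j" using Plp P by auto
    have pQ: "gpath E Q" "hd Q = i" "last Q = j" using Plp QR by auto
    have pR: "gpath E R" "hd R = i" "last R = j" using Plp QR by auto
    show False
      by (rule three_paths[OF sym pP(1) pQ(1) pR(1), of "ball {1..n} E i r"])
        (use QR pP pQ pR sP sQ sR uniq in auto)
  qed
  have two: "cyc_rel {1..n} E r i j" if "2 \<le> card Pl"
  proof -
    have "\<not> card Pl \<le> Suc 0" using that by simp
    then obtain P Q where PQ: "P \<in> Pl" "Q \<in> Pl" "P \<noteq> Q"
      using card_le_Suc0_iff_eq[of Pl] fin by auto
    have pP: "gpath E P" "hd P = i" "last P = j" using Plp PQ by auto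
    have pQ: "gpath E Q" "hd Q = i" "last Q = j" using Plp PQ by auto
    have dP: "distinct P" "P \<noteq> []" using pP by (auto simp: gpath_def walk_def)
    have dQ: "distinct Q" "Q \<noteq> []" using pQ by (auto simp: gpath_def walk_def)
    have h: "hd P = hd Q" "last P = last Q" using pP pQ by auto
    obtain k where k: "0 < k" "k < length P" "k < length Q" "\<forall>t<k. P ! t = Q ! t" "P ! k \<noteq> Q ! k"
      using diverge[OF dP(1) dQ(1) PQ(3) dP(2) dQ(2) h] by blast
    have a: "P ! (k - 1) = Q ! (k - 1)" using k by simp
    obtain xs where x: "is_cycle E (cycle_edges xs)"
      "set xs \<subseteq> set (drop (k - 1) P) \<union> set (drop (k - 1) Q)"
      using two_path_cycle[OF sym pP(1) pQ(1) h(2) k(1,2,3) a k(5)] by blast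
    have "\<Union>(cycle_edges xs) \<subseteq> ball {1..n} E i r \<inter> ball {1..n} E j r"
      by (rule cyc_subset[OF x(2) inball[OF PQ(1)] inball[OF PQ(2)]])
    then show ?thesis unfolding cyc_rel_def cycle_in_def using x(1) by blast
  qed
  have key: "\<bar>B\<bar> \<le> 1 \<and> (B \<noteq> 0 \<longrightarrow> 2 \<le> card Pl)"
  proof (cases "gdist E i j = enat r")
    case True
    then have d1: "dist_mat E r i j = 1" by (simp add: dist_mat_def)
    obtain w where w: "walk E w" "hd w = i" "last w = j" "gdist E i j = enat (length w - 1)"
      using gdist_attained[of E i j] True by auto
    then have lw: "length w - 1 = r" using True by simp
    obtain ys where ys: "gpath E ys" "hd ys = hd w" "last ys = last w" "length ys \<le> length w"
      using walk_to_path[OF w(1)] by blast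
    have yne: "ys \<noteq> []" using ys(1) by (simp add: gpath_def walk_def)
    have "gdist E i j \<le> enat (length ys - 1)"
      using gdist_le[of E ys] ys w(2,3) by (simp add: gpath_def)
    then have "r \<le> length ys - 1" using True by simp
    then have "length ys = r + 1" using ys(4) lw yne by (cases ys) auto
    then have "ys \<in> Sw" using ys w by (simp add: Sw_def)
    then have "Sw \<noteq> {}" by blast
    then have c1: "1 \<le> card Sw" using finS by (simp add: Suc_le_eq card_gt_0_iff)
    have c2: "card Sw \<le> 2" using card_mono[OF fin SwPl] le2 by simp
    have "B = 1 - int (card Sw)" unfolding B_def using d1 saw by simp
    moreover have "card Sw \<le> card Pl" using card_mono[OF fin SwPl] .
    ultimately show ?thesis using c1 c2 by auto
  next
    case False
    then have d0: "dist_mat E r i j = 0" by (simp add: dist_mat_def)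
    have Bv: "B = - int (card Sw)" unfolding B_def using d0 saw by simp
    show ?thesis
    proof (cases "Sw = {}")
      case True then show ?thesis using Bv by simp
    next
      case False
      then obtain p where p: "p \<in> Sw" by auto
      have pp: "gpath E p" "hd p = i" "last p = j" "length p = r + 1" using p by (auto simp: Sw_def)
      have "gdist E i j \<le> enat r" using gdist_le[of E p] pp by (simp add: gpath_def)
      then have lt: "gdist E i j < enat r" using \<open>gdist E i j \<noteq> enat r\<close> by simp
      then have "gdist E i j \<noteq> \<infinity>" by (cases "gdist E i j") auto
      then obtain w where w: "walk E w" "hd w = i" "last w = j" "gdist E i j = enat (length w - 1)"
        using gdist_attained[of E i j] by auto
      then have lw: "length w - 1 < r" using lt by simp
      obtain ys where ys: "gpath E ys" "hd ys = hd w" "last ys = last w" "length ys \<le> length w"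
        using walk_to_path[OF w(1)] by blast
      have wne: "w \<noteq> []" using w(1) by (simp add: walk_def)
      have ly: "length ys < r + 1" using lw ys(4) wne by (cases w) auto
      then have yP: "ys \<in> Pl" using ys w by (simp add: Pl_def paths_le_def)
      have yS: "ys \<notin> Sw" using ly by (simp add: Sw_def)
      have "Sw \<subset> Pl" using SwPl yP yS by blast
      then have "card Sw < card Pl" using fin by (rule psubset_card_mono[rotated])
      have "Sw \<noteq> {}" using p by blast
      then have "0 < card Sw" using finS by (simp add: card_gt_0_iff)
      then have "card Sw = 1" "2 \<le> card Pl" using le2 \<open>card Sw < card Pl\<close> by linarith+
      then show ?thesis using Bv by simp
    qed
  qed
  have k1: "\<bar>B\<bar> \<le> 1" and k2: "B \<noteq> 0 \<Longrightarrow> 2 \<le> card Pl" using key by auto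
  show ?thesis unfolding Pl_def[symmetric]
  proof (intro conjI impI)
    assume "B \<noteq> 0" then show "cyc_rel {1..n} E r i j" using k2 two by blast
  next
    assume "B \<noteq> 0" then show "2 \<le> card Pl" using k2 by blast
  qed (use k1 le2 in auto)
qed

end
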